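(* Let $p_0>0$ and $r>1$, and run the multiplicative price update algorithm on truthful input (true types $(v_i,\mathcal S_i)$) in a fixed order $i=1,\dots,n$, obtaining $S=(S_1,\dots,S_n)$. For each good $e$ let $\ell_e^*=|\{i: e\in S_i\}|$ and $p_e^*=p_0 r^{\ell_e^*}$, and let $v(S)=\sum_{i=1}^n v_i(S_i)$. Then $$v(S)\ge \frac{1}{r-1}\Big(\sum_{e\in\mathsf U}p_e^*-m p_0\Big)\qquad\text{and}\qquad v(S)\ge \mathrm{OPT}-b\sum_{e\in\mathsf U}p_e^*,$$ where $\mathrm{OPT}$ is the maximum of $\sum_i v_i(T_i)$ over all allocations $(T_1,\dots,T_n)$ in which every good belongs to at most $b$ of the sets $T_i$.
   Context: Multi-unit combinatorial auction: a set $\mathsf U$ of $m$ goods, each available in $b\ge1$ copies; $n$ bidders, bidder $i$ having a collection $\mathcal S_i$ of $k$ nonempty subsets of $\mathsf U$ and valuation $v_i:\mathcal S_i\to\mathbb R_{\ge0}$, extended to all $T\subseteq\mathsf U$ by $v_i(T)=\max\{v_i(S'):S'\in\mathcal S_i, S'\subseteq T\}$ ($0$ if none). Multiplicative price update algorithm (parameters $p_0,r$): set $p_e^1=p_0$ for all goods $e$; for $i=1,\dots,n$: let $S_i$ be a set maximizing $v_i(S)$ among $S\in\mathcal S_i$ with $v_i(S)\ge\sum_{e\in S}p_e^i$ ($S_i=\emptyset$ if there is none); set $p_e^{i+1}=r\,p_e^i$ for $e\in S_i$ and $p_e^{i+1}=p_e^i$ otherwise; output $(S_1,\dots,S_n)$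 (which need not respect the supply $b$). *)

theory Defs
  imports Main "HOL-Library.Extended_Real" Complex_Main
begin

definition vext :: "'g set set \<Rightarrow> ('g set \<Rightarrow> real) \<Rightarrow> 'g set \<Rightarrow> real" where
  "vext Sf v T = (if \<exists>S'\<in>Sf. S' \<subseteq> T then Max (v ` {S'\<in>Sf. S' \<subseteq> T}) else 0)"

text \<open>Price of good e seen by bidder i (0-indexed) given the earlier choices S_0..S_{i-1}.\<close>
definition price :: "real \<Rightarrow> real \<Rightarrow> (nat \<Rightarrow> 'g set) \<Rightarrow> nat \<Rightarrow> 'g \<Rightarrow> real" where
  "price p0 r S i e = p0 * r ^ card {j. j < i \<and> e \<in> S j}"

text \<open>S is a possible output of the multiplicative price update algorithm
  (bidders 0..n-1 in this order; ties in the maximisation broken arbitrarily).\<close>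
definition mpu_run ::
  "real \<Rightarrow> real \<Rightarrow> nat \<Rightarrow> (nat \<Rightarrow> 'g set set) \<Rightarrow> (nat \<Rightarrow> 'g set \<Rightarrow> real) \<Rightarrow> (nat \<Rightarrow> 'g set) \<Rightarrow> bool" where
  "mpu_run p0 r n Sf v S \<longleftrightarrow>
     (\<forall>i<n. let afford = {T \<in> Sf i. v i T \<ge> (\<Sum>e\<in>T. price p0 r S i e)} in
        (afford = {} \<and> S i = {}) \<or>
        (S i \<in> afford \<and> (\<forall>T\<in>afford. v i T \<le> v i (S i))))"

definition OPT ::
  "'g set \<Rightarrow> nat \<Rightarrow> nat \<Rightarrow> (nat \<Rightarrow> 'g set set) \<Rightarrow> (nat \<Rightarrow> 'g set \<Rightarrow> real) \<Rightarrow> real" where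
  "OPT U b n Sf v = Max {(\<Sum>i<n. vext (Sf i) (v i) (T i)) | T.
       (\<forall>i<n. T i \<subseteq> U) \<and> (\<forall>e\<in>U. card {i. i < n \<and> e \<in> T i} \<le> b)}"

end

theory Submission
  imports Defs "HOL-Library.FuncSet"
begin

lemma vext_ge: "finite Sf \<Longrightarrow> T' \<in> Sf \<Longrightarrow> T' \<subseteq> T \<Longrightarrow> v T' \<le> vext Sf v T"
  unfolding vext_def by (auto intro!: Max_ge)

lemma vext_nonneg: "finite Sf \<Longrightarrow> (\<forall>T\<in>Sf. v T \<ge> 0) \<Longrightarrow> vext Sf v T \<ge> 0"
proof -
  assume f: "finite Sf" and nn: "\<forall>T\<in>Sf. v T \<ge> 0"
  show ?thesis
  proof (cases "\<exists>S'\<in>Sf. S' \<subseteq> T")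
    case True
    then obtain S' where "S'\<in>Sf" "S' \<subseteq> T" by blast
    then have "v S' \<le> vext Sf v T" using vext_ge f by metis
    then show ?thesis using nn \<open>S'\<in>Sf\<close> by force
  qed (simp add: vext_def)
qed

lemma vext_cases: "finite Sf \<Longrightarrow> vext Sf v T = 0 \<or> (\<exists>T'\<in>Sf. T' \<subseteq> T \<and> vext Sf v T = v T')"
proof -
  assume f: "finite Sf"
  show ?thesis
  proof (cases "\<exists>S'\<in>Sf. S' \<subseteq> T")
    case True
    then have "Max (v ` {S'\<in>Sf. S' \<subseteq> T}) \<in> v ` {S'\<in>Sf. S' \<subseteq> T}"
      using f by (intro Max_in) auto
    then show ?thesis using True unfolding vext_def by auto
  qed (simp add: vext_def)
qed

lemma card_Suc_step: "card {j. j < Suc i \<and> e \<in> S j} = card {j. j < i \<and> e \<in> S j} + (if e \<in> S i then 1 else 0)"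
proof -
  have "{j. j < Suc i \<and> e \<in> S j} = {j. j < i \<and> e \<in> S j} \<union> (if e \<in> S i then {i} else {})"
    by (auto simp: less_Suc_eq)
  then show ?thesis by auto
qed

lemma telescope:
  fixes p0 r :: real and n :: nat
  shows "p0 * r ^ card {j. j < n \<and> e \<in> S j} - p0
     = (\<Sum>i<n. if e \<in> S i then p0 * r ^ card {j. j < i \<and> e \<in> S j} * (r - 1) else 0)"
proof (induction n)
  case 0 then show ?case by simp
next
  case (Suc n)
  define c where "c = card {j. j < n \<and> e \<in> S j}"
  have x: "p0 * (r * r ^ c) - p0 = (p0 * r ^ c - p0) + p0 * r ^ c * (r - 1)"
    by (simp add: algebra_simps)
  show ?case
  proof (cases "e \<in> S n")
    case True
    have "p0 * r ^ card {j. j < Suc n \<and> e \<in> S j} - p0 = p0 * (r * r ^ c) - p0"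
      using True by (simp add: card_Suc_step c_def)
    also have "\<dots> = (p0 * r ^ c - p0) + p0 * r ^ c * (r - 1)" by (rule x)
    also have "\<dots> = (\<Sum>i<Suc n. if e \<in> S i then p0 * r ^ card {j. j < i \<and> e \<in> S j} * (r - 1) else 0)"
      using Suc.IH True by (simp add: c_def)
    finally show ?thesis .
  next
    case False
    then show ?thesis using Suc by (simp add: card_Suc_step)
  qed
qed

theorem lemma2:
  fixes U :: "'g set" and m b n k :: nat
    and Sf :: "nat \<Rightarrow> 'g set set" and v :: "nat \<Rightarrow> 'g set \<Rightarrow> real"
    and p0 r :: real and S :: "nat \<Rightarrow> 'g set"
  assumes "finite U" and "card U = m" and "b \<ge> 1"
    and "\<And>i. i < n \<Longrightarrow> Sf i \<subseteq> Pow U - {{}}"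
    and "\<And>i. i < n \<Longrightarrow> card (Sf i) = k"
    and "\<And>i T. i < n \<Longrightarrow> T \<in> Sf i \<Longrightarrow> v i T \<ge> 0"
    and "p0 > 0" and "r > 1"
    and "mpu_run p0 r n Sf v S"
  shows "(\<Sum>i<n. vext (Sf i) (v i) (S i))
           \<ge> (1 / (r - 1)) * ((\<Sum>e\<in>U. p0 * r ^ card {i. i < n \<and> e \<in> S i}) - m * p0)
    \<and> (\<Sum>i<n. vext (Sf i) (v i) (S i))
           \<ge> OPT U b n Sf v - b * (\<Sum>e\<in>U. p0 * r ^ card {i. i < n \<and> e \<in> S i})"
proof -
  note fU = assms(1)
  have finSf: "finite (Sf i)" if "i < n" for i
    using assms(4)[OF that] fU by (meson Diff_subset finite_Pow_iff finite_subset subset_trans)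
  have vnn: "vext (Sf i) (v i) T \<ge> 0" if "i < n" for i T
    using vext_nonneg[OF finSf[OF that]] assms(6)[OF that] by blast
  have price_nn: "price p0 r S i e \<ge> 0" for i e
    using assms(7,8) unfolding price_def by simp
  have a: "S i \<subseteq> U \<and> (\<Sum>e\<in>S i. price p0 r S i e) \<le> vext (Sf i) (v i) (S i)
     \<and> (\<forall>T'\<in>Sf i. v i T' \<le> vext (Sf i) (v i) (S i) + (\<Sum>e\<in>T'. price p0 r S i e))"
    if i: "i < n" for i
  proof -
    define afford where "afford = {T \<in> Sf i. v i T \<ge> (\<Sum>e\<in>T. price p0 r S i e)}"
    have run: "(afford = {} \<and> S i = {}) \<or> (S i \<in> afford \<and> (\<forall>T\<in>afford. v i T \<le> v i (S i)))"
      using assms(9) i unfolding mpu_run_def afford_def Let_def by blast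
    show ?thesis
    proof (cases "afford = {}")
      case True
      then have Si: "S i = {}" using run by auto
      have "\<forall>T'\<in>Sf i. v i T' \<le> vext (Sf i) (v i) (S i) + (\<Sum>e\<in>T'. price p0 r S i e)"
      proof
        fix T' assume "T' \<in> Sf i"
        then have "v i T' < (\<Sum>e\<in>T'. price p0 r S i e)" using True unfolding afford_def by force
        then show "v i T' \<le> vext (Sf i) (v i) (S i) + (\<Sum>e\<in>T'. price p0 r S i e)"
          using vnn[OF i, of "S i"] by linarith
      qed
      then show ?thesis using Si vnn[OF i, of "S i"] by simp
    next
      case False
      then have Sa: "S i \<in> afford" and mx: "\<forall>T\<in>afford. v i T \<le> v i (S i)" using run by auto
      have SSf: "S i \<in> Sf i" using Sa afford_def by auto
      have ge: "v i (S i) \<le> vext (Sf i) (v i) (S i)" using vext_ge[OF finSf[OF i] SSf] by simp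
      have "\<forall>T'\<in>Sf i. v i T' \<le> vext (Sf i) (v i) (S i) + (\<Sum>e\<in>T'. price p0 r S i e)"
      proof
        fix T' assume T': "T' \<in> Sf i"
        have sn: "(\<Sum>e\<in>T'. price p0 r S i e) \<ge> 0" using price_nn by (simp add: sum_nonneg)
        show "v i T' \<le> vext (Sf i) (v i) (S i) + (\<Sum>e\<in>T'. price p0 r S i e)"
        proof (cases "T' \<in> afford")
          case True then show ?thesis using mx ge sn by fastforce
        next
          case False then show ?thesis using T' vnn[OF i, of "S i"] unfolding afford_def by auto
        qed
      qed
      moreover have "S i \<subseteq> U" using SSf assms(4)[OF i] by auto
      ultimately show ?thesis using Sa ge unfolding afford_def by auto
    qed
  qed
  define V where "V = (\<Sum>i<n. vext (Sf i) (v i) (S i))"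
  define P where "P = (\<Sum>e\<in>U. p0 * r ^ card {i. i < n \<and> e \<in> S i})"
  have "P - m * p0 = (\<Sum>e\<in>U. p0 * r ^ card {i. i < n \<and> e \<in> S i} - p0)"
    unfolding P_def using assms(2) by (simp add: sum_subtractf)
  also have "\<dots> = (\<Sum>e\<in>U. \<Sum>i<n. if e \<in> S i then p0 * r ^ card {j. j < i \<and> e \<in> S j} * (r - 1) else 0)"
    by (rule sum.cong[OF refl], rule telescope)
  also have "\<dots> = (\<Sum>i<n. \<Sum>e\<in>U. if e \<in> S i then p0 * r ^ card {j. j < i \<and> e \<in> S j} * (r - 1) else 0)"
    by (rule sum.swap)
  also have "\<dots> = (\<Sum>i<n. (r - 1) * (\<Sum>e\<in>S i. price p0 r S i e))"
  proof (rule sum.cong[OF refl])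
    fix i assume "i \<in> {..<n}"
    then have sub: "S i \<subseteq> U" using a by auto
    have "(\<Sum>e\<in>U. if e \<in> S i then p0 * r ^ card {j. j < i \<and> e \<in> S j} * (r - 1) else 0)
        = (\<Sum>e\<in>{e\<in>U. e \<in> S i}. p0 * r ^ card {j. j < i \<and> e \<in> S j} * (r - 1))"
      using fU by (simp add: sum.inter_filter)
    also have "{e\<in>U. e \<in> S i} = S i" using sub by auto
    finally show "(\<Sum>e\<in>U. if e \<in> S i then p0 * r ^ card {j. j < i \<and> e \<in> S j} * (r - 1) else 0)
        = (r - 1) * (\<Sum>e\<in>S i. price p0 r S i e)"
      by (simp add: price_def sum_distrib_left algebra_simps)
  qed
  also have "\<dots> \<le> (\<Sum>i<n. (r - 1) * vext (Sf i) (v i) (S i))"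
    using a assms(8) by (intro sum_mono mult_left_mono) auto
  also have "\<dots> = (r - 1) * V" unfolding V_def by (simp add: sum_distrib_left)
  finally have p1: "P - m * p0 \<le> (r - 1) * V" .
  have part1: "(1 / (r - 1)) * (P - m * p0) \<le> V"
  proof -
    have "(1 / (r - 1)) * (P - m * p0) \<le> (1 / (r - 1)) * ((r - 1) * V)"
      using p1 assms(8) by (intro mult_left_mono) auto
    then show ?thesis using assms(8) by simp
  qed
  define pst where "pst e = p0 * r ^ card {i. i < n \<and> e \<in> S i}" for e
  have pst_nn: "pst e \<ge> 0" for e using assms(7,8) pst_def by simp
  have price_le: "price p0 r S i e \<le> pst e" if "i < n" for i e
  proof -
    have "card {j. j < i \<and> e \<in> S j} \<le> card {j. j < n \<and> e \<in> S j}"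
      using that by (intro card_mono) auto
    then have "r ^ card {j. j < i \<and> e \<in> S j} \<le> r ^ card {j. j < n \<and> e \<in> S j}"
      using assms(8) by (intro power_increasing) auto
    then show ?thesis unfolding price_def pst_def using assms(7) by simp
  qed
  define W where "W = (\<lambda>T. \<Sum>i<n. vext (Sf i) (v i) (T i))"
  define Opts where "Opts = {W T | T. (\<forall>i<n. T i \<subseteq> U) \<and> (\<forall>e\<in>U. card {i. i < n \<and> e \<in> T i} \<le> b)}"
  have OPTeq: "OPT U b n Sf v = Max Opts" unfolding OPT_def Opts_def W_def by simp
  have "Opts \<subseteq> W ` (PiE {..<n} (\<lambda>_. Pow U))"
  proof
    fix x assume "x \<in> Opts"
    then obtain T where x: "x = W T" and T: "\<forall>i<n. T i \<subseteq> U" unfolding Opts_def by auto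
    have r1: "restrict T {..<n} \<in> PiE {..<n} (\<lambda>_. Pow U)" using T by auto
    have r2: "W T = W (restrict T {..<n})" unfolding W_def by simp
    show "x \<in> W ` (PiE {..<n} (\<lambda>_. Pow U))" unfolding x by (subst r2) (rule imageI[OF r1])
  qed
  moreover have "finite (W ` (PiE {..<n} (\<lambda>_. Pow U)))"
    using fU by (intro finite_imageI finite_PiE) auto
  ultimately have finO: "finite Opts" by (rule finite_subset)
  have "W (\<lambda>_. {}) \<in> Opts" unfolding Opts_def by auto
  then have "Max Opts \<in> Opts" using finO by (intro Max_in) auto
  then obtain T where OT: "Max Opts = W T" and T: "\<forall>i<n. T i \<subseteq> U"
    and Tb: "\<forall>e\<in>U. card {i. i < n \<and> e \<in> T i} \<le> b" unfolding Opts_def by auto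
  have each: "vext (Sf i) (v i) (T i) \<le> vext (Sf i) (v i) (S i) + (\<Sum>e\<in>T i. pst e)" if i: "i < n" for i
  proof -
    have sT: "(\<Sum>e\<in>T i. pst e) \<ge> 0" using pst_nn by (simp add: sum_nonneg)
    from vext_cases[OF finSf[OF i]] show ?thesis
    proof
      assume "vext (Sf i) (v i) (T i) = 0" then show ?thesis using vnn[OF i, of "S i"] sT by linarith
    next
      assume "\<exists>T'\<in>Sf i. T' \<subseteq> T i \<and> vext (Sf i) (v i) (T i) = v i T'"
      then obtain T' where T': "T' \<in> Sf i" "T' \<subseteq> T i" "vext (Sf i) (v i) (T i) = v i T'" by blast
      have fT: "finite (T i)" using T i fU finite_subset by blast
      have "v i T' \<le> vext (Sf i) (v i) (S i) + (\<Sum>e\<in>T'. price p0 r S i e)" using a[OF i] T' by auto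
      also have "(\<Sum>e\<in>T'. price p0 r S i e) \<le> (\<Sum>e\<in>T'. pst e)" using price_le[OF i] by (intro sum_mono) auto
      also have "(\<Sum>e\<in>T'. pst e) \<le> (\<Sum>e\<in>T i. pst e)" using fT T' pst_nn by (intro sum_mono2) auto
      finally show ?thesis using T' by simp
    qed
  qed
  have "W T \<le> (\<Sum>i<n. vext (Sf i) (v i) (S i) + (\<Sum>e\<in>T i. pst e))"
    unfolding W_def using each by (intro sum_mono) auto
  also have "\<dots> = V + (\<Sum>i<n. \<Sum>e\<in>T i. pst e)" unfolding V_def by (simp add: sum.distrib)
  also have "(\<Sum>i<n. \<Sum>e\<in>T i. pst e) = (\<Sum>i<n. \<Sum>e\<in>U. if e \<in> T i then pst e else 0)"
  proof (rule sum.cong[OF refl])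
    fix i assume "i \<in> {..<n}"
    then have eq: "{e\<in>U. e \<in> T i} = T i" using T by auto
    have "(\<Sum>e\<in>U. if e \<in> T i then pst e else 0) = (\<Sum>e\<in>{e\<in>U. e \<in> T i}. pst e)"
      using fU by (simp add: sum.inter_filter)
    then show "(\<Sum>e\<in>T i. pst e) = (\<Sum>e\<in>U. if e \<in> T i then pst e else 0)"
      unfolding eq by simp
  qed
  also have "\<dots> = (\<Sum>e\<in>U. \<Sum>i<n. if e \<in> T i then pst e else 0)" by (rule sum.swap)
  also have "\<dots> = (\<Sum>e\<in>U. card {i. i < n \<and> e \<in> T i} * pst e)"
  proof (rule sum.cong[OF refl])
    fix e
    have "(\<Sum>i<n. if e \<in> T i then pst e else 0) = (\<Sum>i\<in>{i\<in>{..<n}. e \<in> T i}. pst e)"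
      by (rule sum.inter_filter[symmetric]) simp
    also have "{i\<in>{..<n}. e \<in> T i} = {i. i < n \<and> e \<in> T i}" by auto
    finally show "(\<Sum>i<n. if e \<in> T i then pst e else 0) = card {i. i < n \<and> e \<in> T i} * pst e" by simp
  qed
  also have "\<dots> \<le> (\<Sum>e\<in>U. b * pst e)"
    using Tb pst_nn by (intro sum_mono mult_right_mono) auto
  also have "\<dots> = b * P" unfolding P_def pst_def by (simp add: sum_distrib_left)
  finally have "OPT U b n Sf v \<le> V + b * P" using OPTeq OT by simp
  then show ?thesis using part1 unfolding V_def P_def by simp
qed

end
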